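(* Let $V$ be a real vector space with a basis $\mathbf{e}=\{e_\lambda\}_{\lambda\in\Lambda}$, and let $\boldsymbol{\phi}=\{\phi_\lambda\}_{\lambda\in\Lambda}\subseteq\operatorname{Hom}_{\mathbb{R}}(V,\mathbb{R})$ satisfy $\phi_\lambda(e_\mu)\ge0$ for all $\lambda\neq\mu$. For $x\in V$: (1) $x$ has a Zariski decomposition with respect to $(\mathbf{e},\boldsymbol{\phi})$ if and only if $(-\infty,x]_{\mathbf{e}}\cap\operatorname{Nef}(\boldsymbol{\phi})\neq\emptyset$; (2) a Zariski decomposition of $x$, if it exists, is unique; (3) if a Zariski decomposition $x=y+z$ exists with $z\neq0$, then (3.1) for the matrix $Q=(\phi_\lambda(e_\mu))_{\lambda,\mu\in\operatorname{Supp}(z;\mathbf{e})}$ one has $(-1)^{\#\operatorname{Supp}(z;\mathbf{e})}\det Q>0$, and if $Q$ is symmetric then $Q$ is negative definite; (3.2) $\{e_\lambda\}_{\lambda\in\operatorname{Supp}(z;\mathbf{e})}$ is linearly independent in $V/\operatorname{Num}(\boldsymbol{\phi})$.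
   Context: Write $x=\sum_\lambda x(\lambda;\mathbf{e})e_\lambda$. $x\le_{\mathbf{e}}y$ means $x(\lambda;\mathbf{e})\le y(\lambda;\mathbf{e})$ for all $\lambda$. $\operatorname{Supp}(x;\mathbf{e})=\{\lambda:x(\lambda;\mathbf{e})\neq0\}$, $(-\infty,x]_{\mathbf{e}}=\{v:v\le_{\mathbf{e}}x\}$, $\operatorname{Nef}(\boldsymbol{\phi})=\{v:\phi_\lambda(v)\ge0\ \forall\lambda\}$, $\operatorname{Num}(\boldsymbol{\phi})=\{v:\phi_\lambda(v)=0\ \forall\lambda\}$. A Zariski decomposition of $x$ with respect to $(\mathbf{e},\boldsymbol{\phi})$ is $x=y+z$ with (i) $y\in\operatorname{Nef}(\boldsymbol{\phi})$, $z\ge_{\mathbf{e}}0$; (ii) $\phi_\lambda(y)=0$ for all $\lambda\in\operatorname{Supp}(z;\mathbf{e})$; (iii) $\{w\in\sum_{\lambda\in\operatorname{Supp}(z;\mathbf{e})}\mathbb{R}_{\ge0}e_\lambda:\phi_\lambda(w)\ge0\ \forall\lambda\in\operatorname{Supp}(z;\mathbf{e})\}=\{0\}$. *)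

theory Defs
  imports "HOL-Analysis.Analysis"
begin

definition coord :: "('l \<Rightarrow> 'v::real_vector) \<Rightarrow> 'v \<Rightarrow> 'l \<Rightarrow> real" where
  "coord e x l = representation (range e) x (e l)"

definition le_e :: "('l \<Rightarrow> 'v::real_vector) \<Rightarrow> 'v \<Rightarrow> 'v \<Rightarrow> bool" where
  "le_e e x y \<longleftrightarrow> (\<forall>l. coord e x l \<le> coord e y l)"

definition Supp :: "('l \<Rightarrow> 'v::real_vector) \<Rightarrow> 'v \<Rightarrow> 'l set" where
  "Supp e x = {l. coord e x l \<noteq> 0}"

definition down_set :: "('l \<Rightarrow> 'v::real_vector) \<Rightarrow> 'v \<Rightarrow> 'v set" where
  "down_set e x = {v. le_e e v x}"

definition Nef :: "('l \<Rightarrow> 'v \<Rightarrow> real) \<Rightarrow> 'v set" where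
  "Nef phi = {v. \<forall>l. phi l v \<ge> 0}"

definition Num :: "('l \<Rightarrow> 'v \<Rightarrow> real) \<Rightarrow> 'v set" where
  "Num phi = {v. \<forall>l. phi l v = 0}"

definition pos_cone :: "('l \<Rightarrow> 'v::real_vector) \<Rightarrow> 'l set \<Rightarrow> 'v set" where
  "pos_cone e S = {(\<Sum>l\<in>S. c l *\<^sub>R e l) | c. \<forall>l\<in>S. c l \<ge> 0}"

definition zariski_decomposition ::
  "('l \<Rightarrow> 'v::real_vector) \<Rightarrow> ('l \<Rightarrow> 'v \<Rightarrow> real) \<Rightarrow> 'v \<Rightarrow> 'v \<Rightarrow> 'v \<Rightarrow> bool" where
  "zariski_decomposition e phi x y z \<longleftrightarrow>
     x = y + z \<and>
     y \<in> Nef phi \<and> le_e e 0 z \<and>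
     (\<forall>l\<in>Supp e z. phi l y = 0) \<and>
     {w \<in> pos_cone e (Supp e z). \<forall>l\<in>Supp e z. phi l w \<ge> 0} = {0}"

definition det_on :: "'l set \<Rightarrow> ('l \<Rightarrow> 'l \<Rightarrow> real) \<Rightarrow> real" where
  "det_on S Q = (\<Sum>p\<in>{p. p permutes S}. of_int (sign p) * (\<Prod>i\<in>S. Q i (p i)))"

definition symmetric_on :: "'l set \<Rightarrow> ('l \<Rightarrow> 'l \<Rightarrow> real) \<Rightarrow> bool" where
  "symmetric_on S Q \<longleftrightarrow> (\<forall>i\<in>S. \<forall>j\<in>S. Q i j = Q j i)"

definition negative_definite_on :: "'l set \<Rightarrow> ('l \<Rightarrow> 'l \<Rightarrow> real) \<Rightarrow> bool" where
  "negative_definite_on S Q \<longleftrightarrow>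
     (\<forall>v::'l \<Rightarrow> real. (\<exists>i\<in>S. v i \<noteq> 0) \<longrightarrow> (\<Sum>i\<in>S. \<Sum>j\<in>S. v i * Q i j * v j) < 0)"

definition lin_indep_mod :: "('l \<Rightarrow> 'v::real_vector) \<Rightarrow> 'l set \<Rightarrow> 'v set \<Rightarrow> bool" where
  "lin_indep_mod e S W \<longleftrightarrow>
     (\<forall>T c. finite T \<longrightarrow> T \<subseteq> S \<longrightarrow> (\<Sum>l\<in>T. c l *\<^sub>R e l) \<in> W \<longrightarrow> (\<forall>l\<in>T. c l = 0))"

end

theory Submission
  imports Defs "Jordan_Normal_Form.Determinant" "HOL-Combinatorics.Permutations"
begin

lemma pl1: "prod_list (map (\<lambda>_. (1::real)) xs) = 1" by (induct xs) auto

lemma det_schur_mat: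
  fixes M :: "real mat"
  assumes M: "M \<in> carrier_mat (Suc n) (Suc n)" and p: "M $$ (n,n) \<noteq> 0"
  shows "Determinant.det M = M $$ (n,n) *
    Determinant.det (mat n n (\<lambda>(i,j). M $$ (i,j) - M $$ (i,n) * M $$ (n,j) / M $$ (n,n)))"
proof -
  define L :: "real mat" where "L = mat (Suc n) (Suc n) (\<lambda>(i,j). if i = j then 1 else if j = n then - M $$ (i,n) / M $$ (n,n) else 0)"
  have Lc: "L \<in> carrier_mat (Suc n) (Suc n)" unfolding L_def by simp
  have "upper_triangular L" unfolding L_def by (intro upper_triangularI) auto
  have "diag_mat L = map (\<lambda>_. 1) [0..<Suc n]"
    unfolding L_def diag_mat_def by (auto intro!: map_cong)
  hence dL: "Determinant.det L = 1"
    using det_upper_triangular[OF \<open>upper_triangular L\<close> Lc] by (simp add: pl1)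
  define N where "N = L * M"
  have Nc: "N \<in> carrier_mat (Suc n) (Suc n)" unfolding N_def using Lc M by simp
  have dN: "Determinant.det N = Determinant.det M"
    unfolding N_def using det_mult[OF Lc M] dL by simp
  have Nij: "N $$ (i,j) = (if i = n then M $$ (n,j) else M $$ (i,j) - M $$ (i,n) / M $$ (n,n) * M $$ (n,j))"
    if "i < Suc n" "j < Suc n" for i j
  proof -
    have "N $$ (i,j) = (\<Sum>k\<in>{0..<Suc n}. L $$ (i,k) * M $$ (k,j))"
      unfolding N_def using that Lc M by (simp add: scalar_prod_def)
    also have "\<dots> = (\<Sum>k\<in>{0..<Suc n}. (if k = i then M $$ (i,j) else 0) +
        (if k = n \<and> i \<noteq> n then - M $$ (i,n) / M $$ (n,n) * M $$ (n,j) else 0))"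
      using that unfolding L_def by (intro sum.cong) auto
    also have "\<dots> = (if i = n then M $$ (n,j) else M $$ (i,j) - M $$ (i,n) / M $$ (n,n) * M $$ (n,j))"
      using that by (simp add: sum.distrib)
    finally show ?thesis .
  qed
  have "Determinant.det N = (\<Sum>i<Suc n. N $$ (i,n) * cofactor N i n)"
    by (rule laplace_expansion_column[OF Nc]) simp
  also have "\<dots> = (\<Sum>i<Suc n. if i = n then N $$ (n,n) * cofactor N n n else 0)"
    by (intro sum.cong) (auto simp: Nij p)
  also have "\<dots> = N $$ (n,n) * cofactor N n n" by simp
  also have "cofactor N n n = Determinant.det (mat_delete N n n)"
    unfolding cofactor_def by simp
  also have "mat_delete N n n = mat n n (\<lambda>(i,j). M $$ (i,j) - M $$ (i,n) * M $$ (n,j) / M $$ (n,n))"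
    using Nc by (intro eq_matI) (auto simp: mat_delete_def Nij)
  finally show ?thesis using dN by (simp add: Nij)
qed

lemma det_on_reindex:
  assumes T: "finite T" and f: "bij_betw f T S"
  shows "det_on S Q = det_on T (\<lambda>i j. Q (f i) (f j))"
proof -
  define g where "g = (\<lambda>\<pi> x. if x \<in> S then f (\<pi> (inv_into T f x)) else x)"
  have bij: "bij_betw g {\<pi>. \<pi> permutes T} {\<pi>. \<pi> permutes S}"
    unfolding g_def by (rule bij_betw_permutations[OF f])
  have "det_on S Q = (\<Sum>\<pi>\<in>{\<pi>. \<pi> permutes T}. of_int (sign (g \<pi>)) * (\<Prod>i\<in>S. Q i (g \<pi> i)))"
    unfolding det_on_def by (rule sum.reindex_bij_betw[OF bij, symmetric])
  also have "\<dots> = (\<Sum>\<pi>\<in>{\<pi>. \<pi> permutes T}. of_int (sign \<pi>) * (\<Prod>i\<in>T. Q (f i) (f (\<pi> i))))"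
  proof (intro sum.cong refl)
    fix \<pi> assume \<pi>: "\<pi> \<in> {\<pi>. \<pi> permutes T}"
    have fi: "\<And>x. x \<in> T \<Longrightarrow> inv_into T f (f x) = x"
      using f by (meson bij_betw_inv_into_left)
    interpret permutes_bij_finite \<pi> T S f "inv_into T f" "\<lambda>x. if x \<in> S then f (\<pi> (inv_into T f x)) else x"
      by unfold_locales (use \<pi> f fi T in auto)
    have s: "sign (g \<pi>) = sign \<pi>" using sign_p' unfolding g_def by simp
    have "(\<Prod>i\<in>S. Q i (g \<pi> i)) = (\<Prod>i\<in>T. Q (f i) (g \<pi> (f i)))"
      by (rule prod.reindex_bij_betw[OF f, symmetric])
    also have "\<dots> = (\<Prod>i\<in>T. Q (f i) (f (\<pi> i)))"
      by (intro prod.cong refl) (auto simp: g_def fi f_in_B)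
    finally show "of_int (sign (g \<pi>)) * (\<Prod>i\<in>S. Q i (g \<pi> i)) = of_int (sign \<pi>) * (\<Prod>i\<in>T. Q (f i) (f (\<pi> i)))"
      using s by simp
  qed
  also have "\<dots> = det_on T (\<lambda>i j. Q (f i) (f j))" unfolding det_on_def by simp
  finally show ?thesis .
qed

lemma det_on_mat: "det_on {0..<n} Q = Determinant.det (mat n n (\<lambda>(i,j). Q i j))"
proof -
  have "Determinant.det (mat n n (\<lambda>(i,j). Q i j)) =
    (\<Sum>p\<in>{p. p permutes {0..<n}}. of_int (sign p) * (\<Prod>i = 0..<n. mat n n (\<lambda>(i,j). Q i j) $$ (i, p i)))"
    by (rule det_def') simp
  also have "\<dots> = det_on {0..<n} Q" unfolding det_on_def
    by (intro sum.cong refl arg_cong2[where f="(*)"] prod.cong) (auto dest: permutes_in_image)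
  finally show ?thesis by simp
qed

lemma det_on_schur:
  assumes S: "finite S" and k: "k \<in> S" and p: "A k k \<noteq> 0"
  shows "det_on S A = A k k * det_on (S - {k}) (\<lambda>i j. A i j - A i k * A k j / A k k)"
proof -
  define n where "n = card (S - {k})"
  have cS: "card S = Suc n" unfolding n_def using S k by (metis card_Suc_Diff1)
  obtain g where g: "bij_betw g {0..<n} (S - {k})"
    using ex_bij_betw_nat_finite[of "S - {k}"] S unfolding n_def by auto
  define f where "f = g(n := k)"
  have fg: "\<And>i. i < n \<Longrightarrow> f i = g i" unfolding f_def by simp
  have f: "bij_betw f {0..<Suc n} S"
  proof -
    have "bij_betw f {0..<n} (S - {k})" using g by (rule bij_betw_cong[THEN iffD1, rotated]) (simp add: fg)
    hence "bij_betw f ({0..<n} \<union> {n}) ((S - {k}) \<union> {f n})"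
      by (intro notIn_Un_bij_betw) (auto simp: f_def)
    moreover have "{0..<n} \<union> {n} = {0..<Suc n}" by auto
    moreover have "(S - {k}) \<union> {f n} = S" using k by (auto simp: f_def)
    ultimately show ?thesis by simp
  qed
  define M where "M = mat (Suc n) (Suc n) (\<lambda>(i,j). A (f i) (f j))"
  have fn: "f n = k" by (simp add: f_def)
  have "det_on S A = Determinant.det M"
    unfolding M_def det_on_reindex[OF finite_atLeastLessThan f, of A] det_on_mat by simp
  also have "\<dots> = M $$ (n,n) * Determinant.det (mat n n (\<lambda>(i,j). M $$ (i,j) - M $$ (i,n) * M $$ (n,j) / M $$ (n,n)))"
    by (rule det_schur_mat) (auto simp: M_def fn p)
  also have "mat n n (\<lambda>(i,j). M $$ (i,j) - M $$ (i,n) * M $$ (n,j) / M $$ (n,n)) =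
      mat n n (\<lambda>(i,j). A (g i) (g j) - A (g i) k * A k (g j) / A k k)"
    by (intro eq_matI) (auto simp: M_def fn fg)
  also have "Determinant.det \<dots> = det_on (S - {k}) (\<lambda>i j. A i j - A i k * A k j / A k k)"
    unfolding det_on_reindex[OF finite_atLeastLessThan g] det_on_mat by simp
  finally show ?thesis by (simp add: M_def fn)
qed

definition zmat :: "'l set \<Rightarrow> ('l \<Rightarrow> 'l \<Rightarrow> real) \<Rightarrow> bool" where
  "zmat S A \<longleftrightarrow> (\<forall>i\<in>S. \<forall>j\<in>S. i \<noteq> j \<longrightarrow> A i j \<le> 0)"

definition propP :: "'l set \<Rightarrow> ('l \<Rightarrow> 'l \<Rightarrow> real) \<Rightarrow> bool" where
  "propP S A \<longleftrightarrow> (\<forall>c. (\<forall>i\<in>S. 0 \<le> c i) \<longrightarrow> (\<forall>i\<in>S. (\<Sum>j\<in>S. A i j * c j) \<le> 0) \<longrightarrow> (\<forall>i\<in>S. c i = 0))"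

definition schur :: "('l \<Rightarrow> 'l \<Rightarrow> real) \<Rightarrow> 'l \<Rightarrow> 'l \<Rightarrow> 'l \<Rightarrow> real" where
  "schur A k = (\<lambda>i j. A i j - A i k * A k j / A k k)"

lemma diag_pos:
  assumes S: "finite S" and Z: "zmat S A" and P: "propP S A" and k: "k \<in> S"
  shows "A k k > 0"
proof (rule ccontr)
  assume "\<not> A k k > 0"
  define c where "c = (\<lambda>j. if j = k then 1 else (0::real))"
  have "\<forall>i\<in>S. (\<Sum>j\<in>S. A i j * c j) \<le> 0"
  proof
    fix i assume i: "i \<in> S"
    have "(\<Sum>j\<in>S. A i j * c j) = A i k" using S k by (simp add: c_def if_distrib sum.delta cong: if_cong)
    thus "(\<Sum>j\<in>S. A i j * c j) \<le> 0" using Z i k \<open>\<not> A k k > 0\<close> unfolding zmat_def by (cases "i = k") auto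
  qed
  moreover have "\<forall>i\<in>S. 0 \<le> c i" by (simp add: c_def)
  ultimately have "c k = 0" using P k unfolding propP_def by blast
  thus False by (simp add: c_def)
qed

lemma schur_zmat:
  assumes Z: "zmat S A" and k: "k \<in> S" and a: "A k k > 0"
  shows "zmat (S - {k}) (schur A k)"
  unfolding zmat_def schur_def
proof (intro ballI impI)
  fix i j assume i: "i \<in> S - {k}" and j: "j \<in> S - {k}" and ij: "i \<noteq> j"
  have "A i j \<le> 0" "A i k \<le> 0" "A k j \<le> 0" using Z i j k ij unfolding zmat_def by auto
  hence "A i k * A k j / A k k \<ge> 0" using a by (simp add: mult_nonpos_nonpos)
  thus "A i j - A i k * A k j / A k k \<le> 0" using \<open>A i j \<le> 0\<close> by linarith
qed

lemma schur_propP: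
  assumes S: "finite S" and Z: "zmat S A" and P: "propP S A" and k: "k \<in> S"
  shows "propP (S - {k}) (schur A k)"
  unfolding propP_def
proof (intro allI impI)
  fix c' assume c'0: "\<forall>i\<in>S - {k}. 0 \<le> c' i"
    and c'A: "\<forall>i\<in>S - {k}. (\<Sum>j\<in>S - {k}. schur A k i j * c' j) \<le> 0"
  have a: "A k k > 0" by (rule diag_pos[OF S Z P k])
  define t where "t = - (\<Sum>j\<in>S - {k}. A k j * c' j) / A k k"
  define c where "c = c'(k := t)"
  have "(\<Sum>j\<in>S - {k}. A k j * c' j) \<le> 0"
    using Z k c'0 unfolding zmat_def by (intro sum_nonpos) (auto intro!: mult_nonpos_nonneg)
  hence t0: "t \<ge> 0" unfolding t_def using a by (simp add: divide_nonpos_pos)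
  have split: "(\<Sum>j\<in>S. A i j * c j) = A i k * t + (\<Sum>j\<in>S - {k}. A i j * c' j)" for i
  proof -
    have "(\<Sum>j\<in>S. A i j * c j) = A i k * c k + (\<Sum>j\<in>S - {k}. A i j * c j)"
      using S k by (simp add: sum.remove)
    also have "(\<Sum>j\<in>S - {k}. A i j * c j) = (\<Sum>j\<in>S - {k}. A i j * c' j)"
      by (intro sum.cong) (auto simp: c_def)
    finally show ?thesis by (simp add: c_def)
  qed
  have "\<forall>i\<in>S. (\<Sum>j\<in>S. A i j * c j) \<le> 0"
  proof
    fix i assume i: "i \<in> S"
    show "(\<Sum>j\<in>S. A i j * c j) \<le> 0"
    proof (cases "i = k")
      case True
      thus ?thesis using a by (simp add: split t_def)
    next
      case False
      have "(\<Sum>j\<in>S - {k}. schur A k i j * c' j) = (\<Sum>j\<in>S - {k}. A i j * c' j) - A i k / A k k * (\<Sum>j\<in>S - {k}. A k j * c' j)"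
        unfolding schur_def by (simp add: sum_subtractf sum_distrib_left algebra_simps)
      also have "\<dots> = A i k * t + (\<Sum>j\<in>S - {k}. A i j * c' j)"
        unfolding t_def by (simp add: field_simps)
      moreover have "(\<Sum>j\<in>S - {k}. schur A k i j * c' j) \<le> 0" using c'A i False by simp
      ultimately show ?thesis by (simp add: split)
    qed
  qed
  moreover have "\<forall>i\<in>S. 0 \<le> c i" using c'0 t0 by (auto simp: c_def)
  ultimately have "\<forall>i\<in>S. c i = 0" using P unfolding propP_def by blast
  thus "\<forall>i\<in>S - {k}. c' i = 0" unfolding c_def by (metis DiffE fun_upd_other singletonI)
qed

lemma det_on_empty: "det_on {} A = 1"
  unfolding det_on_def by simp

lemma mmat_det_pos:
  assumes "finite S"
  shows "zmat S A \<Longrightarrow> propP S A \<Longrightarrow> det_on S A > 0"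
  using assms
proof (induction S arbitrary: A rule: finite_induct)
  case empty thus ?case by (simp add: det_on_empty)
next
  case (insert k F)
  have a: "A k k > 0" using diag_pos[OF _ insert.prems] insert.hyps by simp
  have F: "insert k F - {k} = F" using insert.hyps by auto
  have "det_on (insert k F) A = A k k * det_on F (schur A k)"
    using det_on_schur[of "insert k F" k A] a insert.hyps by (simp add: F schur_def)
  moreover have "det_on F (schur A k) > 0"
  proof (rule insert.IH)
    show "zmat F (schur A k)" using schur_zmat[OF insert.prems(1) _ a] by (simp add: F)
    show "propP F (schur A k)" using schur_propP[OF _ insert.prems, of k] insert.hyps by (simp add: F)
  qed
  ultimately show ?case using a by simp
qed

lemma mmat_posdef:
  assumes "finite S"
  shows "zmat S A \<Longrightarrow> propP S A \<Longrightarrow> (\<forall>i\<in>S. \<forall>j\<in>S. A i j = A j i) \<Longrightarrow> (\<exists>i\<in>S. v i \<noteq> 0)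
    \<Longrightarrow> (\<Sum>i\<in>S. \<Sum>j\<in>S. v i * A i j * v j) > 0"
  using assms
proof (induction S arbitrary: A v rule: finite_induct)
  case empty thus ?case by simp
next
  case (insert k F)
  have a: "A k k > 0" using diag_pos[OF _ insert.prems(1,2)] insert.hyps by simp
  have F: "insert k F - {k} = F" using insert.hyps by auto
  have sym: "\<And>i j. i \<in> insert k F \<Longrightarrow> j \<in> insert k F \<Longrightarrow> A i j = A j i" using insert.prems(3) by blast
  define b where "b = (\<Sum>j\<in>F. A k j * v j)"
  have b2: "(\<Sum>i\<in>F. v i * A i k) = b" unfolding b_def
    by (intro sum.cong refl) (simp add: sym mult.commute)
  have e1: "(\<Sum>i\<in>insert k F. \<Sum>j\<in>insert k F. v i * A i j * v j) =
      A k k * v k ^ 2 + 2 * v k * b + (\<Sum>i\<in>F. \<Sum>j\<in>F. v i * A i j * v j)"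
  proof -
    have "(\<Sum>i\<in>insert k F. \<Sum>j\<in>insert k F. v i * A i j * v j) =
        (v k * A k k * v k + (\<Sum>j\<in>F. v k * A k j * v j)) +
        (\<Sum>i\<in>F. v i * A i k * v k + (\<Sum>j\<in>F. v i * A i j * v j))"
      using insert.hyps by simp
    also have "\<dots> = A k k * v k ^ 2 + v k * b + v k * (\<Sum>i\<in>F. v i * A i k) + (\<Sum>i\<in>F. \<Sum>j\<in>F. v i * A i j * v j)"
      unfolding b_def by (simp add: sum.distrib sum_distrib_left sum_distrib_right power2_eq_square algebra_simps)
    finally show ?thesis using b2 by simp
  qed
  have e2: "(\<Sum>i\<in>F. \<Sum>j\<in>F. v i * schur A k i j * v j) = (\<Sum>i\<in>F. \<Sum>j\<in>F. v i * A i j * v j) - b^2 / A k k"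
  proof -
    have "(\<Sum>i\<in>F. \<Sum>j\<in>F. v i * schur A k i j * v j) = (\<Sum>i\<in>F. \<Sum>j\<in>F. v i * A i j * v j) -
       (\<Sum>i\<in>F. \<Sum>j\<in>F. (v i * A i k) * (A k j * v j)) / A k k"
      unfolding schur_def by (simp add: sum_subtractf sum_divide_distrib algebra_simps)
    also have "(\<Sum>i\<in>F. \<Sum>j\<in>F. (v i * A i k) * (A k j * v j)) = (\<Sum>i\<in>F. v i * A i k) * b"
      unfolding b_def by (simp add: sum_product)
    finally show ?thesis using b2 by (simp add: power2_eq_square)
  qed
  show ?case
  proof (cases "\<exists>i\<in>F. v i \<noteq> 0")
    case True
    have "(\<Sum>i\<in>F. \<Sum>j\<in>F. v i * schur A k i j * v j) > 0"
    proof (rule insert.IH)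
      show "zmat F (schur A k)" using schur_zmat[OF insert.prems(1) _ a] by (simp add: F)
      show "propP F (schur A k)" using schur_propP[OF _ insert.prems(1,2), of k] insert.hyps by (simp add: F)
      show "\<forall>i\<in>F. \<forall>j\<in>F. schur A k i j = schur A k j i" unfolding schur_def by (simp add: sym mult.commute)
    qed (use True in auto)
    moreover have "A k k * v k ^ 2 + 2 * v k * b + b^2 / A k k = (A k k * v k + b)^2 / A k k"
      using a by (simp add: field_simps power2_eq_square)
    moreover have "(A k k * v k + b)^2 / A k k \<ge> 0" using a by simp
    ultimately show ?thesis using e1 e2 by linarith
  next
    case False
    hence "v k \<noteq> 0" using insert.prems(4) by auto
    moreover have "b = 0" "(\<Sum>i\<in>F. \<Sum>j\<in>F. v i * A i j * v j) = 0" using False unfolding b_def by auto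
    ultimately show ?thesis using e1 a by simp
  qed
qed

lemma mmat_nonsing:
  assumes S: "finite S" and Z: "zmat S A" and P: "propP S A"
    and c: "\<forall>i\<in>S. (\<Sum>j\<in>S. A i j * c j) = 0"
  shows "\<forall>i\<in>S. c i = 0"
proof -
  have "\<forall>i\<in>S. (\<Sum>j\<in>S. A i j * \<bar>c j\<bar>) \<le> 0"
  proof
    fix i assume i: "i \<in> S"
    have a: "A i i > 0" by (rule diag_pos[OF S Z P i])
    have sp: "\<And>f. (\<Sum>j\<in>S. f j) = f i + (\<Sum>j\<in>S - {i}. f j)" using S i by (simp add: sum.remove)
    have e: "A i i * c i = - (\<Sum>j\<in>S - {i}. A i j * c j)" using c i sp[of "\<lambda>j. A i j * c j"] by simp
    have "A i i * \<bar>c i\<bar> = \<bar>A i i * c i\<bar>" using a by (simp add: abs_mult)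
    also have "\<dots> = \<bar>\<Sum>j\<in>S - {i}. A i j * c j\<bar>" unfolding e by simp
    also have "\<dots> \<le> (\<Sum>j\<in>S - {i}. \<bar>A i j * c j\<bar>)" by (rule sum_abs)
    also have "\<dots> = (\<Sum>j\<in>S - {i}. - (A i j * \<bar>c j\<bar>))"
      using Z i unfolding zmat_def by (intro sum.cong refl) (auto simp: abs_mult abs_of_nonpos)
    finally show "(\<Sum>j\<in>S. A i j * \<bar>c j\<bar>) \<le> 0"
      using sp[of "\<lambda>j. A i j * \<bar>c j\<bar>"] by (simp add: sum_negf)
  qed
  hence "\<forall>i\<in>S. \<bar>c i\<bar> = 0" using P unfolding propP_def by (metis abs_ge_zero)
  thus ?thesis by simp
qed


locale zdl =
  fixes e :: "'l \<Rightarrow> 'v::real_vector" and phi :: "'l \<Rightarrow> 'v \<Rightarrow> real"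
  assumes inj: "inj e" and indep: "independent (range e)" and spn: "span (range e) = UNIV"
    and lin: "\<And>l. linear (phi l)"
    and offd: "\<And>l m. l \<noteq> m \<Longrightarrow> phi l (e m) \<ge> 0"
begin

lemma coord_add: "coord e (a + b) l = coord e a l + coord e b l"
  unfolding coord_def using real_vector.representation_add[OF indep, of b a] spn by simp

lemma coord_diff: "coord e (a - b) l = coord e a l - coord e b l"
  unfolding coord_def using real_vector.representation_diff[OF indep, of b a] spn by simp

lemma coord_scale: "coord e (r *\<^sub>R a) l = r * coord e a l"
  unfolding coord_def using real_vector.representation_scale[OF indep, of a r] spn by simp

lemma coord_zero: "coord e 0 l = 0"
  unfolding coord_def by (simp add: real_vector.representation_zero)

lemma coord_basis: "coord e (e m) l = (if l = m then 1 else 0)"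
  unfolding coord_def using real_vector.representation_basis[OF indep, of "e m"] inj
  by (auto simp: inj_eq)

lemma coord_sum: "coord e (\<Sum>i\<in>I. f i) l = (\<Sum>i\<in>I. coord e (f i) l)"
  unfolding coord_def using real_vector.representation_sum[OF indep, of I f] spn by simp

lemma coord_lincomb: "coord e (\<Sum>m\<in>T. c m *\<^sub>R e m) l = (if finite T \<and> l \<in> T then c l else 0)"
proof -
  have "coord e (\<Sum>m\<in>T. c m *\<^sub>R e m) l = (\<Sum>m\<in>T. if l = m then c m else 0)"
    unfolding coord_sum coord_scale coord_basis by (intro sum.cong) auto
  also have "\<dots> = (if finite T \<and> l \<in> T then c l else 0)" by (cases "finite T") (simp_all add: sum.delta)
  finally show ?thesis .
qed

lemma finite_Supp: "finite (Supp e x)"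
proof -
  have "Supp e x = e -` {b. representation (range e) x b \<noteq> 0}"
    unfolding Supp_def coord_def by auto
  thus ?thesis using finite_vimageI[OF real_vector.finite_representation inj] by simp
qed

lemma expand: assumes T: "finite T" "Supp e x \<subseteq> T"
  shows "(\<Sum>l\<in>T. coord e x l *\<^sub>R e l) = x"
proof -
  have "(\<Sum>l\<in>T. coord e x l *\<^sub>R e l) = (\<Sum>b\<in>e ` T. representation (range e) x b *\<^sub>R b)"
    unfolding coord_def using sum.reindex[OF inj_on_subset[OF inj subset_UNIV], of "\<lambda>b. representation (range e) x b *\<^sub>R b" T]
    by (simp add: o_def)
  also have "\<dots> = (\<Sum>b | representation (range e) x b \<noteq> 0. representation (range e) x b *\<^sub>R b)"
  proof (rule sum.mono_neutral_right)
    show "finite (e ` T)" using T by simp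
    show "{b. representation (range e) x b \<noteq> 0} \<subseteq> e ` T"
    proof
      fix b assume b: "b \<in> {b. representation (range e) x b \<noteq> 0}"
      then obtain l where l: "b = e l" using real_vector.representation_ne_zero by blast
      hence "l \<in> Supp e x" using b by (simp add: Supp_def coord_def)
      thus "b \<in> e ` T" using T l by auto
    qed
  qed auto
  also have "\<dots> = x"
    by (rule real_vector.sum_nonzero_representation_eq[OF indep]) (simp add: spn)
  finally show ?thesis .
qed

lemma coord_eqI: "(\<And>l. coord e a l = coord e b l) \<Longrightarrow> a = b"
proof -
  assume h: "\<And>l. coord e a l = coord e b l"
  let ?T = "Supp e a \<union> Supp e b"
  have "a = (\<Sum>l\<in>?T. coord e a l *\<^sub>R e l)" by (rule expand[symmetric]) (auto simp: finite_Supp)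
  also have "\<dots> = (\<Sum>l\<in>?T. coord e b l *\<^sub>R e l)" using h by simp
  also have "\<dots> = b" by (rule expand) (auto simp: finite_Supp)
  finally show ?thesis .
qed

lemma phi_expand: assumes "finite T" "Supp e x \<subseteq> T"
  shows "phi k x = (\<Sum>m\<in>T. coord e x m * phi k (e m))"
proof -
  have "phi k x = phi k (\<Sum>m\<in>T. coord e x m *\<^sub>R e m)" using expand[OF assms] by simp
  also have "\<dots> = (\<Sum>m\<in>T. coord e x m * phi k (e m))"
    using lin[of k] by (simp add: linear_sum linear_scale)
  finally show ?thesis .
qed

lemma lemA: assumes "coord e r l = 0" "\<And>m. coord e r m \<ge> 0"
  shows "phi l r \<ge> 0"
proof -
  have "phi l r = (\<Sum>m\<in>Supp e r. coord e r m * phi l (e m))"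
    by (rule phi_expand) (auto simp: finite_Supp)
  also have "\<dots> \<ge> 0"
  proof (rule sum_nonneg)
    fix m assume "m \<in> Supp e r"
    hence "m \<noteq> l" using assms(1) by (auto simp: Supp_def)
    thus "coord e r m * phi l (e m) \<ge> 0" using assms(2)[of m] offd[of l m] by simp
  qed
  finally show ?thesis .
qed

lemma zd_le:
  assumes Z1: "zariski_decomposition e phi x y z" and Z2: "zariski_decomposition e phi x y' z'"
  shows "coord e z l \<le> coord e z' l"
proof -
  from Z1 have xy: "x = y + z" and yN: "y \<in> Nef phi" and z0: "le_e e 0 z"
    and yS: "\<forall>l\<in>Supp e z. phi l y = 0"
    and cone: "{w \<in> pos_cone e (Supp e z). \<forall>l\<in>Supp e z. phi l w \<ge> 0} = {0}"
    unfolding zariski_decomposition_def by auto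
  from Z2 have xy': "x = y' + z'" and yN': "y' \<in> Nef phi" and z0': "le_e e 0 z'"
    unfolding zariski_decomposition_def by auto
  define S where "S = Supp e z"
  define d where "d l = coord e z l - coord e z' l" for l
  define T where "T = {l\<in>S. d l > 0}"
  have fS: "finite S" unfolding S_def by (rule finite_Supp)
  have fT: "finite T" "T \<subseteq> S" unfolding T_def using fS by auto
  define u where "u = (\<Sum>l\<in>T. d l *\<^sub>R e l)"
  have cu: "coord e u m = (if m \<in> T then d m else 0)" for m
    unfolding u_def coord_lincomb using fT by simp
  have z'0: "coord e z' m \<ge> 0" for m using z0' by (simp add: le_e_def coord_zero)
  have dle: "m \<notin> T \<Longrightarrow> d m \<le> 0" for m
  proof -
    assume "m \<notin> T"
    show "d m \<le> 0"
    proof (cases "m \<in> S")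
      case True thus ?thesis using \<open>m \<notin> T\<close> by (auto simp: T_def)
    next
      case False hence "coord e z m = 0" by (simp add: S_def Supp_def)
      thus ?thesis using z'0[of m] by (simp add: d_def)
    qed
  qed
  have cu0: "coord e u m \<ge> 0" for m using cu[of m] by (auto simp: T_def)
  have "u \<in> pos_cone e S"
    unfolding pos_cone_def
  proof (intro CollectI exI conjI)
    show "u = (\<Sum>l\<in>S. (if l \<in> T then d l else 0) *\<^sub>R e l)"
      unfolding u_def using sum.inter_restrict[OF fS, of "\<lambda>l. d l *\<^sub>R e l" T] fT
      by (simp add: if_distrib[of "\<lambda>c. c *\<^sub>R _"] Int_absorb1 cong: if_cong)
    show "\<forall>l\<in>S. 0 \<le> (if l \<in> T then d l else 0)" by (auto simp: T_def)
  qed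
  moreover have "\<forall>l\<in>S. phi l u \<ge> 0"
  proof
    fix k assume kS: "k \<in> S"
    show "phi k u \<ge> 0"
    proof (cases "k \<in> T")
      case False
      show ?thesis by (rule lemA) (use cu[of k] False cu0 in auto)
    next
      case True
      define r where "r = u - (z - z')"
      have cr: "coord e r m = coord e u m - d m" for m unfolding r_def d_def by (simp add: coord_diff)
      have "phi k r \<ge> 0"
      proof (rule lemA)
        show "coord e r k = 0" using cr cu True by simp
        show "coord e r m \<ge> 0" for m using cr[of m] cu[of m] dle[of m] by auto
      qed
      moreover have "z - z' = y' - y" using xy xy' by (simp add: algebra_simps)
      moreover have "phi k (y' - y) = phi k y' - phi k y" using lin by (simp add: linear_diff)
      moreover have "phi k y = 0" using yS kS by (simp add: S_def)
      moreover have "phi k y' \<ge> 0" using yN' by (simp add: Nef_def)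
      moreover have "phi k r = phi k u - phi k (z - z')" using lin by (simp add: r_def linear_diff)
      ultimately show ?thesis by (metis diff_ge_0_iff_ge diff_zero order_trans)
    qed
  qed
  ultimately have "u = 0" using cone unfolding S_def by blast
  hence "T = {}" using cu by (metis coord_zero empty_iff less_irrefl mem_Collect_eq subsetI subset_antisym T_def)
  hence "d l \<le> 0" using dle by auto
  thus ?thesis by (simp add: d_def)
qed

lemma zd_unique:
  assumes Z1: "zariski_decomposition e phi x y z" and Z2: "zariski_decomposition e phi x y' z'"
  shows "y = y' \<and> z = z'"
proof -
  have "z = z'" by (rule coord_eqI) (meson order_antisym zd_le Z1 Z2)
  moreover have "y = x - z" "y' = x - z'" using Z1 Z2 unfolding zariski_decomposition_def by (auto simp: algebra_simps)
  ultimately show ?thesis by simp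
qed

lemma zd_exists:
  assumes vx: "le_e e v x" and vN: "v \<in> Nef phi"
  shows "\<exists>y z. zariski_decomposition e phi x y z"
proof -
  define A where "A = {w. le_e e v w \<and> le_e e w x \<and> w \<in> Nef phi}"
  have inA: "w \<in> A" if "\<And>m. coord e v m \<le> coord e w m" "\<And>m. coord e w m \<le> coord e x m" "\<And>m. phi m w \<ge> 0" for w
    using that by (auto simp: A_def le_e_def Nef_def)
  have vA: "v \<in> A" using vx vN by (simp add: A_def le_e_def)
  define t where "t l = Sup ((\<lambda>w. coord e w l) ` A)" for l
  have ne: "(\<lambda>w. coord e w l) ` A \<noteq> {}" for l using vA by auto
  have bdd: "bdd_above ((\<lambda>w. coord e w l) ` A)" for l
    by (rule bdd_aboveI[of _ "coord e x l"]) (auto simp: A_def le_e_def)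
  have t_ge: "w \<in> A \<Longrightarrow> coord e w l \<le> t l" for w l
    unfolding t_def by (rule cSup_upper) (auto intro: bdd)
  have t_le: "t l \<le> coord e x l" for l
    unfolding t_def by (rule cSup_least[OF ne]) (auto simp: A_def le_e_def)
  have tv: "coord e v l \<le> t l" for l using t_ge[OF vA] .
  define F where "F = Supp e (x - v)"
  have fF: "finite F" unfolding F_def by (rule finite_Supp)
  define ys where "ys = v + (\<Sum>l\<in>F. (t l - coord e v l) *\<^sub>R e l)"
  have cys: "coord e ys l = t l" for l
  proof (cases "l \<in> F")
    case True thus ?thesis using fF by (simp add: ys_def coord_add coord_lincomb)
  next
    case False
    hence "coord e x l = coord e v l" by (simp add: F_def Supp_def coord_diff)
    hence "t l = coord e v l" using t_le[of l] tv[of l] by simp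
    thus ?thesis using False by (simp add: ys_def coord_add coord_lincomb)
  qed
  have ysN: "phi k ys \<ge> 0" for k
  proof (rule ccontr)
    assume "\<not> phi k ys \<ge> 0"
    define \<delta> where "\<delta> = - phi k ys"
    have d0: "\<delta> > 0" using \<open>\<not> phi k ys \<ge> 0\<close> by (simp add: \<delta>_def)
    define K where "K = \<bar>phi k (e k)\<bar> + 1"
    have K0: "K > 0" by (simp add: K_def add_nonneg_pos)
    have "t k - \<delta> / K < Sup ((\<lambda>w. coord e w k) ` A)" using d0 K0 by (simp add: t_def[symmetric])
    then obtain w where wA: "w \<in> A" and wk: "t k - \<delta> / K < coord e w k"
      using less_cSupE[OF _ ne] by blast
    define r where "r = ys - w"
    have cr: "coord e r m = t m - coord e w m" for m by (simp add: r_def coord_diff cys)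
    have cr0: "coord e r m \<ge> 0" for m using cr t_ge[OF wA] by simp
    define r0 where "r0 = r - coord e r k *\<^sub>R e k"
    have "phi k r0 \<ge> 0"
    proof (rule lemA)
      show "coord e r0 k = 0" by (simp add: r0_def coord_diff coord_scale coord_basis)
      show "coord e r0 m \<ge> 0" for m using cr0[of m] by (simp add: r0_def coord_diff coord_scale coord_basis)
    qed
    moreover have "phi k r = phi k r0 + coord e r k * phi k (e k)"
      using lin[of k] by (simp add: r0_def linear_diff linear_scale)
    moreover have "coord e r k * phi k (e k) \<ge> - (coord e r k * \<bar>phi k (e k)\<bar>)"
      using cr0[of k] by (metis abs_ge_minus_self minus_le_iff mult_left_mono mult_minus_right)
    moreover have "coord e r k * \<bar>phi k (e k)\<bar> \<le> \<delta> / K * \<bar>phi k (e k)\<bar>"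
      using cr[of k] wk by (intro mult_right_mono) auto
    moreover have "\<delta> / K * \<bar>phi k (e k)\<bar> < \<delta>"
    proof -
      have "\<bar>phi k (e k)\<bar> / K < 1" using K0 by (simp add: K_def)
      hence "\<delta> * (\<bar>phi k (e k)\<bar> / K) < \<delta> * 1" using d0 by (intro mult_strict_left_mono) auto
      thus ?thesis by simp
    qed
    moreover have "phi k w \<ge> 0" using wA by (simp add: A_def Nef_def)
    moreover have "phi k ys = phi k w + phi k r" using lin[of k] by (simp add: r_def linear_diff)
    ultimately show False unfolding \<delta>_def by linarith
  qed
  have ysA: "ys \<in> A" by (rule inA) (auto simp: cys tv t_le ysN)
  define z where "z = x - ys"
  have cz: "coord e z l = coord e x l - t l" for l by (simp add: z_def coord_diff cys)
  have cz0: "coord e z l \<ge> 0" for l using cz t_le[of l] by simp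
  define S where "S = Supp e z"
  have fS: "finite S" unfolding S_def by (rule finite_Supp)
  have czS: "l \<in> S \<Longrightarrow> coord e z l > 0" for l using cz0[of l] by (auto simp: S_def Supp_def)
  have c3: "\<forall>k\<in>S. phi k ys = 0"
  proof (rule ballI, rule ccontr)
    fix k assume kS: "k \<in> S" and "phi k ys \<noteq> 0"
    hence p0: "phi k ys > 0" using ysN[of k] by simp
    define K where "K = \<bar>phi k (e k)\<bar> + 1"
    have K0: "K > 0" by (simp add: K_def add_nonneg_pos)
    define \<epsilon> where "\<epsilon> = min (coord e z k) (phi k ys / K)"
    have e0: "\<epsilon> > 0" using czS[OF kS] p0 K0 by (simp add: \<epsilon>_def)
    define w where "w = ys + \<epsilon> *\<^sub>R e k"
    have cw: "coord e w m = t m + (if m = k then \<epsilon> else 0)" for m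
      by (simp add: w_def coord_add coord_scale coord_basis cys)
    have "w \<in> A"
    proof (rule inA)
      show "coord e v m \<le> coord e w m" for m using tv[of m] e0 by (auto simp: cw)
      show "coord e w m \<le> coord e x m" for m
      proof (cases "m = k")
        case True
        have "\<epsilon> \<le> coord e z k" by (simp add: \<epsilon>_def)
        thus ?thesis using True cz[of k] by (simp add: cw)
      qed (simp add: cw t_le)
      show "phi m w \<ge> 0" for m
      proof -
        have pw: "phi m w = phi m ys + \<epsilon> * phi m (e k)" using lin[of m] by (simp add: w_def linear_add linear_scale)
        show ?thesis
        proof (cases "m = k")
          case False thus ?thesis using pw ysN[of m] offd[of m k] e0 by simp
        next
          case True
          have "\<epsilon> * \<bar>phi k (e k)\<bar> \<le> phi k ys / K * \<bar>phi k (e k)\<bar>"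
            by (intro mult_right_mono) (auto simp: \<epsilon>_def)
          also have "\<dots> \<le> phi k ys"
          proof -
            have "\<bar>phi k (e k)\<bar> / K \<le> 1" using K0 by (simp add: K_def)
            hence "phi k ys * (\<bar>phi k (e k)\<bar> / K) \<le> phi k ys * 1" using p0 by (intro mult_left_mono) auto
            thus ?thesis by simp
          qed
          finally have "\<epsilon> * \<bar>phi k (e k)\<bar> \<le> phi k ys" .
          moreover have "\<epsilon> * phi k (e k) \<ge> - (\<epsilon> * \<bar>phi k (e k)\<bar>)"
            using e0 by (metis abs_ge_minus_self less_eq_real_def minus_le_iff mult_left_mono mult_minus_right)
          ultimately show ?thesis using pw True by simp
        qed
      qed
    qed
    hence "coord e w k \<le> t k" by (rule t_ge)
    thus False using e0 by (simp add: cw)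
  qed
  have c4: "{w \<in> pos_cone e S. \<forall>l\<in>S. phi l w \<ge> 0} = {0}"
  proof (intro equalityI subsetI)
    fix w assume "w \<in> {0 :: 'v}"
    hence "w = 0" by simp
    moreover have "(0::'v) \<in> pos_cone e S" unfolding pos_cone_def
      by (intro CollectI exI[of _ "\<lambda>_. 0"]) simp
    ultimately show "w \<in> {w \<in> pos_cone e S. \<forall>l\<in>S. phi l w \<ge> 0}"
      using lin by (simp add: linear_0)
  next
    fix w assume w: "w \<in> {w \<in> pos_cone e S. \<forall>l\<in>S. phi l w \<ge> 0}"
    then obtain c where wc: "w = (\<Sum>l\<in>S. c l *\<^sub>R e l)" and c0: "\<forall>l\<in>S. c l \<ge> 0"
      by (auto simp: pos_cone_def)
    have cw: "coord e w m = (if m \<in> S then c m else 0)" for m using fS by (simp add: wc coord_lincomb)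
    have cw0: "coord e w m \<ge> 0" for m using cw c0 by simp
    show "w \<in> {0}"
    proof (rule ccontr)
      assume "w \<notin> {0}"
      hence "w \<noteq> 0" by simp
      then obtain l where "coord e w l \<noteq> 0" using coord_eqI[of w 0] by (auto simp: coord_zero)
      hence lS: "l \<in> S" and cl: "c l > 0" using cw[of l] c0 by (auto split: if_splits)
      define \<epsilon> where "\<epsilon> = Min ((\<lambda>l. coord e z l / (c l + 1)) ` S)"
      have e0: "\<epsilon> > 0" unfolding \<epsilon>_def using fS lS czS c0
        by (subst Min_gr_iff) (auto intro!: divide_pos_pos simp: add_nonneg_pos)
      have ele: "m \<in> S \<Longrightarrow> \<epsilon> \<le> coord e z m / (c m + 1)" for m
        unfolding \<epsilon>_def using fS by (intro Min_le) auto
      define w' where "w' = ys + \<epsilon> *\<^sub>R w"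
      have cw': "coord e w' m = t m + \<epsilon> * coord e w m" for m by (simp add: w'_def coord_add coord_scale cys)
      have "w' \<in> A"
      proof (rule inA)
        show "coord e v m \<le> coord e w' m" for m
        proof -
          have "\<epsilon> * coord e w m \<ge> 0" using e0 cw0[of m] by simp
          thus ?thesis using tv[of m] by (simp add: cw')
        qed
        show "coord e w' m \<le> coord e x m" for m
        proof (cases "m \<in> S")
          case True
          have cm: "c m \<ge> 0" using c0 True by simp
          have "\<epsilon> * c m \<le> coord e z m / (c m + 1) * c m" using ele[OF True] cm by (rule mult_right_mono)
          also have "\<dots> \<le> coord e z m"
          proof -
            have "c m / (c m + 1) \<le> 1" using cm by simp
            hence "coord e z m * (c m / (c m + 1)) \<le> coord e z m * 1" using cz0[of m] by (intro mult_left_mono) auto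
            thus ?thesis by simp
          qed
          finally show ?thesis using True cz[of m] by (simp add: cw' cw)
        qed (simp add: cw' cw t_le)
        show "phi m w' \<ge> 0" for m
        proof -
          have pw: "phi m w' = phi m ys + \<epsilon> * phi m w" using lin[of m] by (simp add: w'_def linear_add linear_scale)
          have "phi m w \<ge> 0"
          proof (cases "m \<in> S")
            case True thus ?thesis using w by simp
          next
            case False show ?thesis by (rule lemA) (use False cw cw0 in auto)
          qed
          thus ?thesis using pw ysN[of m] e0 by simp
        qed
      qed
      hence "coord e w' l \<le> t l" by (rule t_ge)
      moreover have "\<epsilon> * coord e w l > 0" using e0 cl cw[of l] lS by simp
      ultimately show False by (simp add: cw')
    qed
  qed
  have "zariski_decomposition e phi x ys z"
    unfolding zariski_decomposition_def
  proof (intro conjI)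
    show "x = ys + z" by (simp add: z_def)
    show "ys \<in> Nef phi" using ysN by (simp add: Nef_def)
    show "le_e e 0 z" using cz0 by (simp add: le_e_def coord_zero)
    show "\<forall>l\<in>Supp e z. phi l ys = 0" using c3 by (simp add: S_def)
    show "{w \<in> pos_cone e (Supp e z). \<forall>l\<in>Supp e z. phi l w \<ge> 0} = {0}" using c4 by (simp add: S_def)
  qed
  thus ?thesis by blast
qed


lemma zd_part3:
  assumes ZD: "zariski_decomposition e phi x y z"
  shows "(let S = Supp e z; Q = (\<lambda>l m. phi l (e m)) in
            ((-1) ^ card S * det_on S Q > 0
             \<and> (symmetric_on S Q \<longrightarrow> negative_definite_on S Q))
            \<and> lin_indep_mod e S (Num phi))"
proof -
  define S where "S = Supp e z"
  define Q where "Q = (\<lambda>l m. phi l (e m))"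
  define A where "A = (\<lambda>i j. - Q i j)"
  have fS: "finite S" unfolding S_def by (rule finite_Supp)
  have cone: "{w \<in> pos_cone e S. \<forall>l\<in>S. phi l w \<ge> 0} = {0}"
    using ZD unfolding zariski_decomposition_def S_def by blast
  have phisum: "phi i (\<Sum>j\<in>T. c j *\<^sub>R e j) = (\<Sum>j\<in>T. c j * Q i j)" for i T c
    using lin[of i] by (simp add: linear_sum linear_scale Q_def)
  have Z: "zmat S A" unfolding zmat_def A_def Q_def using offd by auto
  have P: "propP S A" unfolding propP_def
  proof (intro allI impI)
    fix c assume c0: "\<forall>i\<in>S. 0 \<le> c i" and cA: "\<forall>i\<in>S. (\<Sum>j\<in>S. A i j * c j) \<le> 0"
    define w where "w = (\<Sum>j\<in>S. c j *\<^sub>R e j)"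
    have "w \<in> pos_cone e S" unfolding pos_cone_def w_def using c0 by blast
    moreover have "\<forall>l\<in>S. phi l w \<ge> 0"
    proof
      fix l assume "l \<in> S"
      hence "(\<Sum>j\<in>S. A l j * c j) \<le> 0" using cA by blast
      hence "(\<Sum>j\<in>S. - (c j * Q l j)) \<le> 0" by (simp add: A_def mult.commute)
      thus "phi l w \<ge> 0" unfolding w_def phisum by (simp add: sum_negf)
    qed
    ultimately have "w = 0" using cone by blast
    thus "\<forall>i\<in>S. c i = 0" using fS by (metis coord_lincomb coord_zero w_def)
  qed
  have det: "(-1) ^ card S * det_on S Q > 0"
  proof -
    have "det_on S A = (-1) ^ card S * det_on S Q"
    proof -
      have "\<And>p. (\<Prod>i\<in>S. A i (p i)) = (-1) ^ card S * (\<Prod>i\<in>S. Q i (p i))"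
      proof -
        fix p
        have "(\<Prod>i\<in>S. A i (p i)) = (\<Prod>i\<in>S. (-1) * Q i (p i))" unfolding A_def by simp
        also have "\<dots> = (-1) ^ card S * (\<Prod>i\<in>S. Q i (p i))" by (simp only: prod.distrib prod_constant)
        finally show "(\<Prod>i\<in>S. A i (p i)) = (-1) ^ card S * (\<Prod>i\<in>S. Q i (p i))" .
      qed
      thus ?thesis unfolding det_on_def by (simp add: sum_distrib_left algebra_simps)
    qed
    thus ?thesis using mmat_det_pos[OF fS Z P] by simp
  qed
  have nd: "symmetric_on S Q \<longrightarrow> negative_definite_on S Q"
  proof
    assume "symmetric_on S Q"
    hence sy: "\<forall>i\<in>S. \<forall>j\<in>S. A i j = A j i" unfolding symmetric_on_def A_def by simp
    show "negative_definite_on S Q" unfolding negative_definite_on_def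
    proof (intro allI impI)
      fix v :: "'l \<Rightarrow> real" assume "\<exists>i\<in>S. v i \<noteq> 0"
      hence "(\<Sum>i\<in>S. \<Sum>j\<in>S. v i * A i j * v j) > 0" using mmat_posdef[OF fS Z P sy] by blast
      thus "(\<Sum>i\<in>S. \<Sum>j\<in>S. v i * Q i j * v j) < 0" unfolding A_def by (simp add: sum_negf)
    qed
  qed
  have li: "lin_indep_mod e S (Num phi)" unfolding lin_indep_mod_def
  proof (intro allI impI)
    fix T c assume fT: "finite T" and TS: "T \<subseteq> S" and inN: "(\<Sum>l\<in>T. c l *\<^sub>R e l) \<in> Num phi"
    define c' where "c' = (\<lambda>l. if l \<in> T then c l else 0)"
    have "\<forall>i\<in>S. (\<Sum>j\<in>S. A i j * c' j) = 0"
    proof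
      fix i assume "i \<in> S"
      have "(\<Sum>j\<in>S. A i j * c' j) = (\<Sum>j\<in>T. A i j * c j)"
        unfolding c'_def using sum.inter_restrict[OF fS, of "\<lambda>j. A i j * c j" T] TS
        by (simp add: if_distrib[of "\<lambda>x. _ * x"] Int_absorb1 cong: if_cong)
      also have "\<dots> = - phi i (\<Sum>l\<in>T. c l *\<^sub>R e l)" unfolding phisum A_def
        by (simp add: sum_negf mult.commute)
      also have "\<dots> = 0" using inN by (simp add: Num_def)
      finally show "(\<Sum>j\<in>S. A i j * c' j) = 0" .
    qed
    hence "\<forall>i\<in>S. c' i = 0" by (rule mmat_nonsing[OF fS Z P])
    thus "\<forall>l\<in>T. c l = 0" using TS unfolding c'_def by (metis subsetD)
  qed
  show ?thesis using det nd li unfolding S_def[symmetric] Q_def[symmetric] Let_def by simp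
qed

end

theorem proposition1p1p1:
  fixes e :: "'l \<Rightarrow> 'v::real_vector"
    and phi :: "'l \<Rightarrow> 'v \<Rightarrow> real"
    and x :: 'v
  assumes basis_inj: "inj e"
    and basis_indep: "independent (range e)"
    and basis_span: "span (range e) = UNIV"
    and phi_linear: "\<And>l. linear (phi l)"
    and phi_offdiag: "\<And>l m. l \<noteq> m \<Longrightarrow> phi l (e m) \<ge> 0"
  shows
    "((\<exists>y z. zariski_decomposition e phi x y z) \<longleftrightarrow> down_set e x \<inter> Nef phi \<noteq> {})
     \<and> (\<forall>y z y' z'. zariski_decomposition e phi x y z \<longrightarrow> zariski_decomposition e phi x y' z'
          \<longrightarrow> y = y' \<and> z = z')
     \<and> (\<forall>y z. zariski_decomposition e phi x y z \<longrightarrow> z \<noteq> 0 \<longrightarrow>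
          (let S = Supp e z; Q = (\<lambda>l m. phi l (e m)) in
            ((-1) ^ card S * det_on S Q > 0
             \<and> (symmetric_on S Q \<longrightarrow> negative_definite_on S Q))
            \<and> lin_indep_mod e S (Num phi)))"
proof -
  interpret zdl e phi by (rule zdl.intro[OF assms])
  have p1: "(\<exists>y z. zariski_decomposition e phi x y z) \<longleftrightarrow> down_set e x \<inter> Nef phi \<noteq> {}"
  proof
    assume "\<exists>y z. zariski_decomposition e phi x y z"
    then obtain y z where Z: "zariski_decomposition e phi x y z" by blast
    hence "y \<in> down_set e x \<inter> Nef phi"
      unfolding zariski_decomposition_def down_set_def le_e_def by (auto simp: coord_add coord_zero)
    thus "down_set e x \<inter> Nef phi \<noteq> {}" by blast
  next
    assume "down_set e x \<inter> Nef phi \<noteq> {}"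
    then obtain v where "le_e e v x" "v \<in> Nef phi" by (auto simp: down_set_def)
    thus "\<exists>y z. zariski_decomposition e phi x y z" by (rule zd_exists)
  qed
  show ?thesis using p1 zd_unique zd_part3 by blast
qed

end
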